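(* Let $\Omega$ be a circle domain with $\infty\in\Omega$, with boundary circles $\gamma_j$, open complementary disks $B_j$ bounded by $\gamma_j$, and reflections $R_j$ across $\gamma_j$. Then $$\sup\big\{\mathrm{Area}\big(R_{i_1}\circ\dots\circ R_{i_k}(B_{i_{k+1}})\big): i_1,\dots,i_{k+1} \text{ with } i_j\ne i_{j+1}\big\}\longrightarrow0\quad\text{as }k\to\infty;$$ that is, the area of the disks in the complement of $\overline{\Omega_k}=\bigcup_{l(T)\le k}T(\overline\Omega)$ tends to zero as $k\to\infty$.
   Context: A circle domain is a domain in $\widehat{\mathbb C}$ each boundary component of which is a geometric circle or a point. $B_j$ denotes the open disk with $\partial B_j=\gamma_j$ and $B_j\cap\Omega=\emptyset$. $\Gamma(\Omega)$ is the group generated by the $R_j$; each $T\in\Gamma(\Omega)\setminus\{\mathrm{id}\}$ has a unique reduced form $R_{i_1}\circ\dots\circ R_{i_k}$ with consecutive indices distinct, and $l(T)=k$ ($l(\mathrm{id})=0$). Area is Euclidean area. *)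

theory Defs
  imports "HOL-Analysis.Analysis"
begin

text \<open>A circle domain containing \<infinity>, represented by its finite part \<Omega> \<subseteq> \<complex>:
  \<Omega> is open and connected, its complement in \<complex> is bounded (i.e. \<infinity> is an interior
  point in the Riemann sphere), and every connected component of its boundary is
  either a point or a geometric circle.\<close>
definition circle_domain_inf :: "complex set \<Rightarrow> bool" where
  "circle_domain_inf \<Omega> \<longleftrightarrow> open \<Omega> \<and> connected \<Omega> \<and> bounded (- \<Omega>) \<and>
     (\<forall>K \<in> components (frontier \<Omega>).
        (\<exists>z. K = {z}) \<or> (\<exists>c r. 0 < r \<and> K = sphere c r))"

definition boundary_circles :: "complex set \<Rightarrow> (complex \<times> real) set" where
  "boundary_circles \<Omega> = {(c, r). 0 < r \<and> sphere c r \<in> components (frontier \<Omega>)}"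

definition refl_circle :: "complex \<Rightarrow> real \<Rightarrow> complex \<Rightarrow> complex" where
  "refl_circle c r z = c + complex_of_real (r\<^sup>2) / cnj (z - c)"

definition refl_word :: "(complex \<times> real) list \<Rightarrow> complex \<Rightarrow> complex" where
  "refl_word ws = foldr (\<lambda>(c, r) f. refl_circle c r \<circ> f) ws id"

text \<open>Image disk R_{i_1} \<circ> ... \<circ> R_{i_k}(B_{i_{k+1}}) for the list [i_1, ..., i_{k+1}].\<close>
definition word_disk :: "(complex \<times> real) list \<Rightarrow> complex set" where
  "word_disk ws = refl_word (butlast ws) ` ball (fst (last ws)) (snd (last ws))"

end

theory Submission
  imports Defs
begin


lemma refl_dist:
  fixes c z w :: complex
  assumes r: "r > 0" and rho: "\<rho> > 0" and z: "dist z c \<ge> \<rho>" and w: "dist w c \<ge> \<rho>"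
  shows "dist (refl_circle c r z) (refl_circle c r w) \<le> (r/\<rho>)^2 * dist z w"
proof -
  define a where "a = z - c"
  define b where "b = w - c"
  have na: "norm a \<ge> \<rho>" using z by (simp add: a_def dist_norm)
  have nb: "norm b \<ge> \<rho>" using w by (simp add: b_def dist_norm)
  have a0: "a \<noteq> 0" using na rho by auto
  have b0: "b \<noteq> 0" using nb rho by auto
  have "refl_circle c r z - refl_circle c r w = complex_of_real (r^2) * (cnj b - cnj a) / (cnj a * cnj b)"
    using a0 b0 by (simp add: refl_circle_def a_def[symmetric] b_def[symmetric] field_simps)
  hence "dist (refl_circle c r z) (refl_circle c r w) = r^2 * norm (b - a) / (norm a * norm b)"
    by (simp add: dist_norm norm_mult norm_divide norm_power complex_cnj_diff[symmetric] del: complex_cnj_diff)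
  also have "b - a = w - z" by (simp add: a_def b_def)
  also have "r^2 * norm (w - z) / (norm a * norm b) \<le> r^2 * norm (w - z) / (\<rho> * \<rho>)"
    by (rule divide_left_mono) (use na nb rho in \<open>auto intro!: mult_mono mult_pos_pos\<close>)
  also have "\<dots> = (r/\<rho>)^2 * dist z w" by (simp add: power2_eq_square dist_norm norm_minus_commute)
  finally show ?thesis .
qed

lemma refl_in:
  fixes c z :: complex
  assumes r: "r > 0" and z: "dist z c > r"
  shows "dist (refl_circle c r z) c < r"
proof -
  have nz: "norm (z - c) > r" using z by (simp add: dist_norm)
  have "dist (refl_circle c r z) c = r^2 / norm (z - c)"
    by (simp add: refl_circle_def dist_norm norm_divide norm_power complex_cnj_diff[symmetric] del: complex_cnj_diff)
  also have "\<dots> < r" using nz r by (simp add: power2_eq_square divide_less_eq)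
  finally show ?thesis .
qed

definition good :: "(complex \<times> real) set \<Rightarrow> bool" where
  "good P \<longleftrightarrow> (\<forall>p\<in>P. snd p > 0) \<and>
     (\<forall>p\<in>P. \<forall>q\<in>P. p \<noteq> q \<longrightarrow> snd p + snd q < dist (fst p) (fst q))"

definition lipf :: "complex \<times> real \<Rightarrow> complex \<times> real \<Rightarrow> real" where
  "lipf p q = (snd p / (dist (fst p) (fst q) - snd q))^2"

fun Lw :: "(complex \<times> real) list \<Rightarrow> real" where
  "Lw [] = 1"
| "Lw [p] = 1"
| "Lw (p # q # rest) = lipf p q * Lw (q # rest)"

lemma refl_word_Nil [simp]: "refl_word [] = id"
  by (simp add: refl_word_def)

lemma refl_word_Cons [simp]: "refl_word (p # ws) = refl_circle (fst p) (snd p) \<circ> refl_word ws"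
  by (cases p) (simp add: refl_word_def)

lemma refl_word_append: "refl_word (ws @ vs) = refl_word ws \<circ> refl_word vs"
  by (induction ws) auto

lemma Lw_nonneg: "Lw ws \<ge> 0"
  by (induction ws rule: Lw.induct) (auto simp: lipf_def)

lemma lipf_le1:
  assumes "good P" "p \<in> P" "q \<in> P" "p \<noteq> q"
  shows "lipf p q \<le> 1" "lipf p q < 1"
proof -
  have "snd p > 0" "snd q > 0" "snd p + snd q < dist (fst p) (fst q)"
    using assms unfolding good_def by auto
  hence "0 \<le> snd p / (dist (fst p) (fst q) - snd q)" "snd p / (dist (fst p) (fst q) - snd q) < 1"
    by auto
  thus "lipf p q < 1" unfolding lipf_def by (simp add: power_less_one_iff abs_less_iff)
  thus "lipf p q \<le> 1" by simp
qed

lemma Lw_le1: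
  assumes "good P" "set ws \<subseteq> P" "successively (\<noteq>) ws"
  shows "Lw ws \<le> 1"
  using assms(2,3)
proof (induction ws rule: Lw.induct)
  case (3 p q rest)
  hence "lipf p q \<le> 1" "Lw (q # rest) \<le> 1" using lipf_le1(1)[OF assms(1)] by auto
  thus ?case using Lw_nonneg[of "q # rest"] by (simp add: mult_le_one lipf_def)
qed auto

lemma Lw_le_pow:
  assumes "\<forall>a\<in>set ws. \<forall>b\<in>set ws. a \<noteq> b \<longrightarrow> lipf a b \<le> qq" "0 \<le> qq" "successively (\<noteq>) ws"
  shows "Lw ws \<le> qq ^ (length ws - 1)"
  using assms
proof (induction ws rule: Lw.induct)
  case (3 p q rest)
  hence "lipf p q \<le> qq" "Lw (q # rest) \<le> qq ^ (length rest)" by auto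
  thus ?case using Lw_nonneg[of "q # rest"] \<open>0 \<le> qq\<close>
    by (auto intro!: mult_mono simp: lipf_def)
qed auto


lemma word_main:
  assumes "good P" "set ws \<subseteq> P" "successively (\<noteq>) ws" "ws \<noteq> []"
  shows "\<forall>z\<in>ball (fst (last ws)) (snd (last ws)).
            refl_word (butlast ws) z \<in> ball (fst (hd ws)) (snd (hd ws))"
    and "\<forall>z\<in>ball (fst (last ws)) (snd (last ws)). \<forall>w\<in>ball (fst (last ws)) (snd (last ws)).
            dist (refl_word (butlast ws) z) (refl_word (butlast ws) w) \<le> Lw ws * dist z w"
proof -
  have "(\<forall>z\<in>ball (fst (last ws)) (snd (last ws)).
            refl_word (butlast ws) z \<in> ball (fst (hd ws)) (snd (hd ws))) \<and>
        (\<forall>z\<in>ball (fst (last ws)) (snd (last ws)). \<forall>w\<in>ball (fst (last ws)) (snd (last ws)).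
            dist (refl_word (butlast ws) z) (refl_word (butlast ws) w) \<le> Lw ws * dist z w)"
    using assms(2-4)
  proof (induction ws rule: Lw.induct)
    case (2 p)
    then show ?case by (simp add: dist_commute)
  next
    case (3 p q rest)
    let ?T = "refl_word (butlast (q # rest))"
    let ?l = "last (q # rest)"
    have IH: "\<forall>z\<in>ball (fst ?l) (snd ?l). ?T z \<in> ball (fst q) (snd q)"
      "\<forall>z\<in>ball (fst ?l) (snd ?l). \<forall>w\<in>ball (fst ?l) (snd ?l). dist (?T z) (?T w) \<le> Lw (q # rest) * dist z w"
      using 3 by auto
    have pq: "p \<noteq> q" "p \<in> P" "q \<in> P" using 3 by auto
    with assms(1) have rp: "snd p > 0" and rq: "snd q > 0" and d: "snd p + snd q < dist (fst p) (fst q)"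
      unfolding good_def by auto
    define \<rho> where "\<rho> = dist (fst p) (fst q) - snd q"
    have rho: "\<rho> > snd p" using d by (simp add: \<rho>_def)
    have far: "dist y (fst p) \<ge> \<rho>" if "y \<in> ball (fst q) (snd q)" for y
      using that dist_triangle[of "fst p" "fst q" y] by (auto simp: \<rho>_def dist_commute)
    have eq: "refl_word (butlast (p # q # rest)) = refl_circle (fst p) (snd p) \<circ> ?T" by simp
    show ?case unfolding eq
    proof (intro conjI ballI)
      fix z assume z: "z \<in> ball (fst (last (p # q # rest))) (snd (last (p # q # rest)))"
      hence "?T z \<in> ball (fst q) (snd q)" using IH(1) by simp
      hence "dist (?T z) (fst p) > snd p" using far rho by force
      from refl_in[OF rp this] show "(refl_circle (fst p) (snd p) \<circ> ?T) z \<in> ball (fst (hd (p # q # rest))) (snd (hd (p # q # rest)))"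
        by (simp add: dist_commute)
    next
      fix z w assume z: "z \<in> ball (fst (last (p # q # rest))) (snd (last (p # q # rest)))"
        and w: "w \<in> ball (fst (last (p # q # rest))) (snd (last (p # q # rest)))"
      hence zz: "?T z \<in> ball (fst q) (snd q)" and ww: "?T w \<in> ball (fst q) (snd q)" using IH(1) by auto
      have "dist ((refl_circle (fst p) (snd p) \<circ> ?T) z) ((refl_circle (fst p) (snd p) \<circ> ?T) w)
          \<le> (snd p / \<rho>)^2 * dist (?T z) (?T w)"
        using refl_dist[OF rp _ far[OF zz] far[OF ww]] rho rp by simp
      also have "\<dots> \<le> (snd p / \<rho>)^2 * (Lw (q # rest) * dist z w)"
        using IH(2) z w by (intro mult_left_mono) auto
      also have "\<dots> = Lw (p # q # rest) * dist z w" by (simp add: lipf_def \<rho>_def)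
      finally show "dist ((refl_circle (fst p) (snd p) \<circ> ?T) z) ((refl_circle (fst p) (snd p) \<circ> ?T) w)
          \<le> Lw (p # q # rest) * dist z w" .
    qed
  qed auto
  thus "\<forall>z\<in>ball (fst (last ws)) (snd (last ws)).
            refl_word (butlast ws) z \<in> ball (fst (hd ws)) (snd (hd ws))"
    and "\<forall>z\<in>ball (fst (last ws)) (snd (last ws)). \<forall>w\<in>ball (fst (last ws)) (snd (last ws)).
            dist (refl_word (butlast ws) z) (refl_word (butlast ws) w) \<le> Lw ws * dist z w"
    by auto
qed

lemma word_disk_cball:
  assumes "good P" "set ws \<subseteq> P" "successively (\<noteq>) ws" "ws \<noteq> []"
  shows "\<exists>x. word_disk ws \<subseteq> cball x (Lw ws * snd (last ws))"
proof -
  let ?c = "fst (last ws)" and ?r = "snd (last ws)"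
  have "last ws \<in> P" using assms by auto
  hence r: "?r > 0" using assms(1) by (auto simp: good_def)
  hence c: "?c \<in> ball ?c ?r" by simp
  show ?thesis
  proof (intro exI subsetI)
    fix y assume "y \<in> word_disk ws"
    then obtain z where z: "z \<in> ball ?c ?r" and y: "y = refl_word (butlast ws) z"
      by (auto simp: word_disk_def)
    have "dist (refl_word (butlast ws) ?c) y \<le> Lw ws * dist ?c z"
      using word_main(2)[OF assms] c z y by auto
    also have "\<dots> \<le> Lw ws * ?r" using z Lw_nonneg[of ws] by (intro mult_left_mono) auto
    finally show "y \<in> cball (refl_word (butlast ws) ?c) (Lw ws * ?r)" by simp
  qed
qed

lemma word_disk_snoc:
  assumes "good P" "set (ws @ [x]) \<subseteq> P" "successively (\<noteq>) (ws @ [x])" "ws \<noteq> []"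
  shows "word_disk (ws @ [x]) \<subseteq> word_disk ws"
proof -
  have ne: "last ws \<noteq> x" using assms(3,4) by (simp add: successively_append_iff)
  have inP: "last ws \<in> P" "x \<in> P" using assms(2,4) by auto
  with assms(1) ne have rp: "snd (last ws) > 0" and d: "snd (last ws) + snd x < dist (fst (last ws)) (fst x)"
    unfolding good_def by auto
  have ws: "refl_word ws = refl_word (butlast ws) \<circ> refl_circle (fst (last ws)) (snd (last ws))"
    using refl_word_append[of "butlast ws" "[last ws]"] assms(4) by simp
  show ?thesis
  proof
    fix y assume "y \<in> word_disk (ws @ [x])"
    then obtain z where z: "z \<in> ball (fst x) (snd x)" and y: "y = refl_word ws z"
      by (auto simp: word_disk_def)
    have "dist z (fst (last ws)) > snd (last ws)"
      using z d dist_triangle[of "fst (last ws)" "fst x" z] by (auto simp: dist_commute)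
    from refl_in[OF rp this]
    have "refl_circle (fst (last ws)) (snd (last ws)) z \<in> ball (fst (last ws)) (snd (last ws))"
      by (simp add: dist_commute)
    thus "y \<in> word_disk ws" using y ws by (auto simp: word_disk_def)
  qed
qed

lemma word_disk_take:
  assumes "good P" "set ws \<subseteq> P" "successively (\<noteq>) ws" "1 \<le> m" "m \<le> length ws"
  shows "word_disk ws \<subseteq> word_disk (take m ws)"
proof -
  have "n \<le> length ws \<longrightarrow> word_disk (take n ws) \<subseteq> word_disk (take m ws)" if "m \<le> n" for n
    using that
  proof (induction n rule: dec_induct)
    case base then show ?case by simp
  next
    case (step n)
    show ?case
    proof
      assume len: "Suc n \<le> length ws"
      have IH: "word_disk (take n ws) \<subseteq> word_disk (take m ws)" using step len by simp
      have tk: "take (Suc n) ws = take n ws @ [ws ! n]" using len by (simp add: take_Suc_conv_app_nth)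
      have "successively (\<noteq>) (take (Suc n) ws @ drop (Suc n) ws)"
        using assms(3) by (simp only: append_take_drop_id)
      hence s1: "successively (\<noteq>) (take n ws @ [ws ! n])"
        unfolding successively_append_iff tk by blast
      have s2: "set (take n ws @ [ws ! n]) \<subseteq> P" using assms(2) set_take_subset[of "Suc n" ws] tk by (metis subset_trans)
      have s3: "take n ws \<noteq> []" using step(1) len assms(4) by (auto simp: take_eq_Nil)
      have "word_disk (take (Suc n) ws) \<subseteq> word_disk (take n ws)"
        unfolding tk by (rule word_disk_snoc[OF assms(1) s2 s1 s3])
      thus "word_disk (take (Suc n) ws) \<subseteq> word_disk (take m ws)" using IH by (rule subset_trans)
    qed
  qed
  from this[of "length ws"] assms(4,5) show ?thesis by simp
qed



lemma cd_basic:
  assumes cd: "circle_domain_inf \<Omega>" and p: "(c, r) \<in> boundary_circles \<Omega>"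
  shows "r > 0" "sphere c r \<subseteq> closure \<Omega>" "ball c r \<inter> closure \<Omega> = {}" "cball c r \<subseteq> - \<Omega>"
proof -
  have op: "open \<Omega>" and con: "connected \<Omega>" and bd: "bounded (- \<Omega>)"
    using cd by (auto simp: circle_domain_inf_def)
  show r: "r > 0" using p by (simp add: boundary_circles_def)
  have sf: "sphere c r \<subseteq> frontier \<Omega>"
    using p in_components_subset by (auto simp: boundary_circles_def)
  have fr: "frontier \<Omega> = closure \<Omega> - \<Omega>" using op by (simp add: frontier_def interior_open)
  show "sphere c r \<subseteq> closure \<Omega>" using sf fr by auto
  have sO: "sphere c r \<inter> \<Omega> = {}" using sf fr by auto
  have "ball c r \<inter> \<Omega> = {} \<or> (- cball c r) \<inter> \<Omega> = {}"
  proof (rule connectedD[OF con])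
    show "\<Omega> \<subseteq> ball c r \<union> - cball c r"
    proof
      fix x assume "x \<in> \<Omega>"
      hence "x \<notin> sphere c r" using sO by auto
      thus "x \<in> ball c r \<union> - cball c r" by auto
    qed
  qed auto
  moreover have "(- cball c r) \<inter> \<Omega> \<noteq> {}"
  proof
    assume "(- cball c r) \<inter> \<Omega> = {}"
    hence "\<Omega> \<subseteq> cball c r" by auto
    hence "bounded \<Omega>" using bounded_cball bounded_subset by blast
    hence "bounded (\<Omega> \<union> - \<Omega>)" using bd by (rule bounded_Un[THEN iffD2, OF conjI])
    thus False by simp
  qed
  ultimately have bO: "ball c r \<inter> \<Omega> = {}" by blast
  thus "ball c r \<inter> closure \<Omega> = {}" by (simp add: open_Int_closure_eq_empty)
  show "cball c r \<subseteq> - \<Omega>" using bO sO by (auto simp: cball_def ball_def sphere_def less_eq_real_def)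
qed

lemma sphere_inj:
  fixes c c' :: complex
  assumes r: "r > 0" "r' > 0" and eq: "sphere c r = sphere c' r'"
  shows "c = c' \<and> r = r'"
proof -
  have cc: "c = c'"
  proof (rule ccontr)
    assume ne: "c \<noteq> c'"
    define d where "d = dist c c'"
    have d: "d > 0" using ne by (simp add: d_def)
    define u where "u = (c - c') / complex_of_real d"
    have nu: "norm u = 1" using d by (simp add: u_def norm_divide d_def dist_norm)
    have cu: "c - c' = complex_of_real d * u" using d by (simp add: u_def)
    have "c' = c - (c - c')" by simp
    also have "\<dots> = c - complex_of_real d * u" by (simp only: cu)
    finally have c': "c' = c - complex_of_real d * u" .
    have "c + complex_of_real r * u \<in> sphere c r" using nu r by (simp add: dist_norm norm_mult)
    hence "c + complex_of_real r * u \<in> sphere c' r'" using eq by simp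
    hence "norm (c' - (c + complex_of_real r * u)) = r'" by (simp add: dist_norm)
    moreover have "c' - (c + complex_of_real r * u) = - (complex_of_real (d + r) * u)"
      unfolding c' by (simp add: algebra_simps)
    ultimately have e1: "norm (complex_of_real (d + r) * u) = r'" by simp
    have "c - complex_of_real r * u \<in> sphere c r" using nu r by (simp add: dist_norm norm_mult)
    hence "c - complex_of_real r * u \<in> sphere c' r'" using eq by simp
    hence "norm (c' - (c - complex_of_real r * u)) = r'" by (simp add: dist_norm)
    moreover have "c' - (c - complex_of_real r * u) = - (complex_of_real (d - r) * u)"
      unfolding c' by (simp add: algebra_simps)
    ultimately have e2: "norm (complex_of_real (d - r) * u) = r'" by simp
    from e1 nu have "\<bar>d + r\<bar> = r'" by (simp only: norm_mult norm_of_real mult_1_right)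
    moreover from e2 nu have "\<bar>d - r\<bar> = r'" by (simp only: norm_mult norm_of_real mult_1_right)
    ultimately have "\<bar>d + r\<bar> = \<bar>d - r\<bar>" by simp
    thus False using d r by linarith
  qed
  have "c + complex_of_real r \<in> sphere c r" using r by (simp add: dist_norm)
  hence "c + complex_of_real r \<in> sphere c' r'" using eq by simp
  hence "r = r'" using cc r by (simp add: dist_norm)
  with cc show ?thesis by simp
qed

lemma cd_good:
  assumes cd: "circle_domain_inf \<Omega>"
  shows "good (boundary_circles \<Omega>)"
  unfolding good_def
proof (intro conjI ballI impI)
  fix p assume "p \<in> boundary_circles \<Omega>"
  thus "snd p > 0" by (cases p) (auto simp: boundary_circles_def)
next
  fix p q assume p: "p \<in> boundary_circles \<Omega>" and q: "q \<in> boundary_circles \<Omega>" and pq: "p \<noteq> q"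
  obtain c r where pp: "p = (c, r)" by (cases p)
  obtain c' r' where qq: "q = (c', r')" by (cases q)
  have P: "(c, r) \<in> boundary_circles \<Omega>" and Q: "(c', r') \<in> boundary_circles \<Omega>" using p q pp qq by auto
  note bP = cd_basic[OF cd P] and bQ = cd_basic[OF cd Q]
  have compP: "sphere c r \<in> components (frontier \<Omega>)" and compQ: "sphere c' r' \<in> components (frontier \<Omega>)"
    using P Q by (auto simp: boundary_circles_def)
  have "sphere c r \<noteq> sphere c' r'" using sphere_inj[OF bP(1) bQ(1)] pq pp qq by auto
  hence ss: "sphere c r \<inter> sphere c' r' = {}" using components_nonoverlap[OF compP compQ] by simp
  have "sphere c' r' \<inter> ball c r = {}" using bQ(2) bP(3) by auto
  hence sc: "sphere c' r' \<inter> cball c r = {}" using ss by (auto simp: cball_def ball_def sphere_def less_eq_real_def)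
  have "ball c' r' \<inter> cball c r = {} \<or> (- cball c' r') \<inter> cball c r = {}"
  proof (rule connectedD[OF convex_connected[OF convex_cball]])
    show "cball c r \<subseteq> ball c' r' \<union> - cball c' r'"
    proof
      fix x assume "x \<in> cball c r"
      hence "x \<notin> sphere c' r'" using sc by auto
      thus "x \<in> ball c' r' \<union> - cball c' r'" by auto
    qed
  qed auto
  moreover have "(- cball c' r') \<inter> cball c r \<noteq> {}"
  proof
    assume "(- cball c' r') \<inter> cball c r = {}"
    hence "sphere c r \<subseteq> ball c' r'" using ss by (auto simp: cball_def ball_def sphere_def less_eq_real_def)
    moreover have "c + complex_of_real r \<in> sphere c r" using bP(1) by (simp add: dist_norm)
    ultimately show False using bP(2) bQ(3) by blast
  qed
  ultimately have dj: "ball c' r' \<inter> cball c r = {}" by blast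
  hence dj2: "cball c' r' \<inter> cball c r = {}" using sc by (auto simp: cball_def ball_def sphere_def less_eq_real_def)
  show "snd p + snd q < dist (fst p) (fst q)"
  proof (rule ccontr)
    assume "\<not> ?thesis"
    hence le: "dist c c' \<le> r + r'" using pp qq by simp
    define x where "x = c + complex_of_real (r / (r + r')) * (c' - c)"
    have rr: "r + r' > 0" using bP(1) bQ(1) by simp
    have "x - c = complex_of_real (r / (r + r')) * (c' - c)" by (simp add: x_def)
    hence "norm (x - c) = \<bar>r / (r + r')\<bar> * norm (c' - c)" by (simp only: norm_mult norm_of_real)
    hence "dist c x = r / (r + r') * dist c c'"
      using rr bP(1) bQ(1) by (simp add: dist_norm norm_minus_commute)
    also have "\<dots> \<le> r / (r + r') * (r + r')" using le rr bP(1) by (intro mult_left_mono) auto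
    finally have x1: "x \<in> cball c r" using rr by simp
    have t: "r' / (r + r') = 1 - r / (r + r')" using rr by (simp add: field_simps)
    have "c' - x = complex_of_real (1 - r / (r + r')) * (c' - c)"
      by (simp add: x_def algebra_simps)
    hence "c' - x = complex_of_real (r' / (r + r')) * (c' - c)" by (simp only: t)
    hence "norm (c' - x) = \<bar>r' / (r + r')\<bar> * norm (c' - c)" by (simp only: norm_mult norm_of_real)
    hence "dist c' x = r' / (r + r') * dist c c'"
      using rr bQ(1) by (simp add: dist_norm norm_minus_commute)
    also have "\<dots> \<le> r' / (r + r') * (r + r')" using le rr bQ(1) by (intro mult_left_mono) auto
    finally have x2: "x \<in> cball c' r'" using rr by simp
    show False using x1 x2 dj2 by blast
  qed
qed

lemma sep_finite:
  fixes S :: "complex set"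
  assumes b: "bounded S" and d: "\<delta> > 0" and sep: "\<forall>x\<in>S. \<forall>y\<in>S. x \<noteq> y \<longrightarrow> \<delta> \<le> dist x y"
  shows "finite S"
proof (rule ccontr)
  assume inf: "infinite S"
  have "compact (closure S)" using b by (simp add: compact_closure)
  then obtain x where "x islimpt S"
    using inf closure_subset unfolding compact_eq_Bolzano_Weierstrass by blast
  then obtain y1 where y1: "y1 \<in> S" "y1 \<noteq> x" "dist y1 x < \<delta> / 2"
    using d unfolding islimpt_approachable by (meson half_gt_zero)
  have "dist y1 x > 0" using y1 by simp
  then obtain y2 where y2: "y2 \<in> S" "y2 \<noteq> x" "dist y2 x < min (\<delta>/2) (dist y1 x)"
    using \<open>x islimpt S\<close> d unfolding islimpt_approachable by (metis min_less_iff_conj half_gt_zero)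
  have "y1 \<noteq> y2" using y2 by auto
  hence "\<delta> \<le> dist y1 y2" using sep y1 y2 by blast
  moreover have "dist y1 y2 \<le> dist y1 x + dist y2 x" by (rule dist_triangle2)
  ultimately show False using y1 y2 by linarith
qed

lemma cd_bound:
  assumes cd: "circle_domain_inf \<Omega>"
  obtains B where "B > 0" "\<forall>p\<in>boundary_circles \<Omega>. snd p \<le> B \<and> norm (fst p) \<le> B"
proof -
  have "bounded (- \<Omega>)" using cd by (simp add: circle_domain_inf_def)
  then obtain B where B: "B > 0" "\<forall>x\<in>- \<Omega>. norm x \<le> B" by (meson bounded_pos)
  have "snd p \<le> 2 * B \<and> norm (fst p) \<le> 2 * B" if p: "p \<in> boundary_circles \<Omega>" for p
  proof -
    obtain c r where pp: "p = (c, r)" by (cases p)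
    note bb = cd_basic[OF cd p[unfolded pp]]
    have "c \<in> cball c r" "c + complex_of_real r \<in> cball c r" using bb(1) by (auto simp: dist_norm)
    hence "c \<in> - \<Omega>" "c + complex_of_real r \<in> - \<Omega>" using bb(4) by blast+
    hence n1: "norm c \<le> B" and n2: "norm (c + complex_of_real r) \<le> B" using B by auto
    have "r = norm ((c + complex_of_real r) - c)" using bb(1) by simp
    also have "\<dots> \<le> norm (c + complex_of_real r) + norm c" by (rule norm_triangle_ineq4)
    finally show ?thesis using n1 n2 B pp by simp
  qed
  thus ?thesis using that[of "2 * B"] B by auto
qed

lemma cd_finite:
  assumes cd: "circle_domain_inf \<Omega>" and e: "\<epsilon> > 0"
  shows "finite {p \<in> boundary_circles \<Omega>. \<epsilon> \<le> snd p}"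
proof -
  let ?F = "{p \<in> boundary_circles \<Omega>. \<epsilon> \<le> snd p}"
  have g: "good (boundary_circles \<Omega>)" by (rule cd_good[OF cd])
  obtain B where B: "B > 0" "\<forall>p\<in>boundary_circles \<Omega>. snd p \<le> B \<and> norm (fst p) \<le> B"
    using cd_bound[OF cd] by blast
  have inj: "inj_on fst ?F"
  proof (rule inj_onI)
    fix p q assume "p \<in> ?F" "q \<in> ?F" "fst p = fst q"
    thus "p = q" using g unfolding good_def by (metis (no_types, lifting) dist_self mem_Collect_eq not_add_less1 less_le_not_le add_pos_pos)
  qed
  have "finite (fst ` ?F)"
  proof (rule sep_finite)
    show "bounded (fst ` ?F)" unfolding bounded_iff using B by (intro exI[of _ B]) fastforce
    show "0 < 2 * \<epsilon>" using e by simp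
    show "\<forall>x\<in>fst ` ?F. \<forall>y\<in>fst ` ?F. x \<noteq> y \<longrightarrow> 2 * \<epsilon> \<le> dist x y"
    proof (intro ballI impI)
      fix x y assume "x \<in> fst ` ?F" "y \<in> fst ` ?F" "x \<noteq> y"
      then obtain p q where "p \<in> ?F" "q \<in> ?F" "x = fst p" "y = fst q" "p \<noteq> q" by auto
      thus "2 * \<epsilon> \<le> dist x y" using g unfolding good_def by fastforce
    qed
  qed
  thus ?thesis using inj finite_image_iff by blast
qed



theorem proposition7p3:
  fixes \<Omega> :: "complex set"
  assumes "circle_domain_inf \<Omega>"
  shows "(\<lambda>k. SUP ws \<in> {ws. length ws = Suc k \<and> set ws \<subseteq> boundary_circles \<Omega>
                              \<and> successively (\<noteq>) ws}.
               emeasure lborel (word_disk ws)) \<longlonglongrightarrow> 0"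
proof -
  let ?P = "boundary_circles \<Omega>"
  define V where "V = unit_ball_vol (DIM(complex))"
  have V: "V \<ge> 0" by (simp add: V_def)
  have g: "good ?P" by (rule cd_good[OF assms])
  obtain B where B: "B > 0" "\<forall>p\<in>?P. snd p \<le> B \<and> norm (fst p) \<le> B"
    using cd_bound[OF assms] by blast
  have meas: "emeasure lborel (cball x \<rho>) = ennreal (V * \<rho>^2)" if "\<rho> \<ge> 0" for x :: complex and \<rho>
    using emeasure_cball[OF that, of x] by (simp add: V_def)
  have main: "\<exists>N. \<forall>k\<ge>N. \<forall>ws. length ws = Suc k \<and> set ws \<subseteq> ?P \<and> successively (\<noteq>) ws
                \<longrightarrow> emeasure lborel (word_disk ws) \<le> ennreal \<delta>" if \<delta>: "\<delta> > 0" for \<delta>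
  proof -
    define t where "t = sqrt (\<delta> / (V + 1))"
    have t: "t > 0" using \<delta> V by (simp add: t_def)
    have "t^2 = \<delta> / (V + 1)" using \<delta> V by (simp add: t_def)
    hence "t^2 + V * t^2 = \<delta>" using \<delta> V by (simp add: field_simps)
    hence Vt: "V * t^2 \<le> \<delta>" using zero_le_power2[of t] by linarith
    have fin: "emeasure lborel (word_disk ws) \<le> ennreal \<delta>"
      if "word_disk ws \<subseteq> cball x \<rho>" "\<rho> \<le> t" for ws x \<rho>
    proof -
      have "emeasure lborel (word_disk ws) \<le> emeasure lborel (cball x t)"
        using that by (intro emeasure_mono) auto
      also have "\<dots> = ennreal (V * t^2)" using meas t by simp
      also have "\<dots> \<le> ennreal \<delta>" using Vt by (rule ennreal_leI)
      finally show ?thesis .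
    qed
    define F where "F = {p \<in> ?P. t \<le> snd p}"
    have finF: "finite F" using cd_finite[OF assms t] by (simp add: F_def)
    define Q where "Q = insert 0 ((\<lambda>(a,b). lipf a b) ` {(a,b). a \<in> F \<and> b \<in> F \<and> a \<noteq> b})"
    have "{(a,b). a \<in> F \<and> b \<in> F \<and> a \<noteq> b} \<subseteq> F \<times> F" by auto
    hence "finite {(a,b). a \<in> F \<and> b \<in> F \<and> a \<noteq> b}" using finF finite_subset by blast
    hence finQ: "finite Q" by (simp add: Q_def)
    define q where "q = Max Q"
    have q0: "0 \<le> q" using finQ by (simp add: q_def Q_def)
    have qle: "lipf a b \<le> q" if "a \<in> F" "b \<in> F" "a \<noteq> b" for a b
      using finQ that unfolding q_def Q_def by (intro Max_ge) auto
    have q1: "q < 1"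
    proof -
      have "q \<in> Q" unfolding q_def using finQ by (intro Max_in) (auto simp: Q_def)
      moreover have "\<forall>y\<in>Q. y < 1"
        using lipf_le1(2)[OF g] by (auto simp: Q_def F_def)
      ultimately show ?thesis by blast
    qed
    have "(\<lambda>n. q ^ n) \<longlonglongrightarrow> 0" using q0 q1 by (intro LIMSEQ_power_zero) simp
    hence "\<forall>\<^sub>F n in sequentially. q ^ n < t / B" using t B(1) by (simp add: order_tendsto_iff)
    then obtain N where N: "q ^ N < t / B" by (meson eventually_sequentially order_refl)
    hence NB: "q ^ N * B \<le> t" using B(1) by (simp add: field_simps)
    show ?thesis
    proof (intro exI allI impI)
      fix k ws assume k: "N \<le> k" and ws: "length ws = Suc k \<and> set ws \<subseteq> ?P \<and> successively (\<noteq>) ws"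
      hence len: "length ws = Suc k" and sP: "set ws \<subseteq> ?P" and suc: "successively (\<noteq>) ws" by auto
      have ne: "ws \<noteq> []" using len by auto
      show "emeasure lborel (word_disk ws) \<le> ennreal \<delta>"
      proof (cases "\<exists>m<length ws. snd (ws ! m) < t")
        case True
        then obtain m where m: "m < length ws" "snd (ws ! m) < t" by blast
        let ?v = "take (Suc m) ws"
        have sub: "word_disk ws \<subseteq> word_disk ?v"
          using word_disk_take[OF g sP suc, of "Suc m"] m by simp
        have tk: "?v = take m ws @ [ws ! m]" using m by (simp add: take_Suc_conv_app_nth)
        have lv: "last ?v = ws ! m" using tk by simp
        have "successively (\<noteq>) (?v @ drop (Suc m) ws)"
          using suc by (simp only: append_take_drop_id)
        hence sv: "successively (\<noteq>) ?v" unfolding successively_append_iff by blast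
        have pv: "set ?v \<subseteq> ?P" using set_take_subset[of "Suc m" ws] sP by (rule subset_trans)
        have nv: "?v \<noteq> []" using ne by simp
        obtain x where x: "word_disk ?v \<subseteq> cball x (Lw ?v * snd (last ?v))"
          using word_disk_cball[OF g pv sv nv] by blast
        have "ws ! m \<in> ?P" using m sP by auto
        hence pos: "snd (ws ! m) > 0" using g by (auto simp: good_def)
        have "Lw ?v * snd (last ?v) \<le> 1 * snd (ws ! m)"
          unfolding lv using Lw_le1[OF g pv sv] pos by (intro mult_right_mono) auto
        hence "Lw ?v * snd (last ?v) \<le> t" using m by simp
        thus ?thesis using fin sub x by (meson subset_trans)
      next
        case False
        have sF: "set ws \<subseteq> F"
        proof
          fix p assume "p \<in> set ws"
          then obtain i where i: "i < length ws" "ws ! i = p" by (auto simp: in_set_conv_nth)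
          hence "t \<le> snd p" using False by force
          thus "p \<in> F" using sP \<open>p \<in> set ws\<close> by (auto simp: F_def)
        qed
        obtain x where x: "word_disk ws \<subseteq> cball x (Lw ws * snd (last ws))"
          using word_disk_cball[OF g sP suc ne] by blast
        have "Lw ws \<le> q ^ (length ws - 1)"
          by (rule Lw_le_pow) (use sF qle q0 suc in blast)+
        also have "\<dots> = q ^ k" using len by simp
        also have "\<dots> \<le> q ^ N" using q0 q1 k by (intro power_decreasing) auto
        finally have L: "Lw ws \<le> q ^ N" .
        have "last ws \<in> ?P" using sP ne by auto
        hence lb: "snd (last ws) \<le> B" "snd (last ws) > 0" using B g by (auto simp: good_def)
        have "Lw ws * snd (last ws) \<le> q ^ N * B"
          using L lb Lw_nonneg[of ws] q0 by (intro mult_mono) auto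
        hence "Lw ws * snd (last ws) \<le> t" using NB by simp
        thus ?thesis using fin x by blast
      qed
    qed
  qed
  let ?S = "\<lambda>k. SUP ws \<in> {ws. length ws = Suc k \<and> set ws \<subseteq> ?P \<and> successively (\<noteq>) ws}.
               emeasure lborel (word_disk ws)"
  show ?thesis
    unfolding order_tendsto_iff
  proof (intro conjI allI impI)
    fix l :: ennreal assume "l < 0" thus "\<forall>\<^sub>F k in sequentially. l < ?S k" by simp
  next
    fix u :: ennreal assume u: "u > 0"
    obtain y where y: "0 < y" "y < u" using dense[OF u] by blast
    have ytop: "y < top" using y(2) top_greatest by (rule less_le_trans)
    define \<delta> where "\<delta> = enn2real y"
    have yd: "y = ennreal \<delta>" using ytop by (simp add: \<delta>_def)
    have d: "\<delta> > 0" unfolding \<delta>_def enn2real_positive_iff using y ytop by simp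
    obtain N where N: "\<forall>k\<ge>N. \<forall>ws. length ws = Suc k \<and> set ws \<subseteq> ?P \<and> successively (\<noteq>) ws
                \<longrightarrow> emeasure lborel (word_disk ws) \<le> ennreal \<delta>"
      using main[OF d] by blast
    show "\<forall>\<^sub>F k in sequentially. ?S k < u"
    proof (rule eventually_sequentiallyI[of N])
      fix k assume "N \<le> k"
      hence "?S k \<le> ennreal \<delta>" using N by (intro SUP_least) blast
      thus "?S k < u" using y yd by simp
    qed
  qed
qed

end
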